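(* Let $P_n$ be a path on $n$ vertices with an arbitrary total order on its vertices. Then $R_o(P_n,P_n)\le 2^{\lceil\log_2 n\rceil\cdot(\lceil\log_2 n\rceil+1)}$.
   Context: An ordered graph is a graph with a total order $\prec$ on its vertices. An ordered graph $F$ is contained in an ordered graph $H$ if there is an injective map $V(F)\to V(H)$ preserving both the vertex order and adjacency. The ordered Ramsey number $R_o(F,G)$ is the smallest $N$ such that every red/blue colouring of the edges of the ordered complete graph $K_N$ contains a blue copy of $F$ or a red copy of $G$. *)

theory Defs
  imports Complex_Main
begin

text \<open>Ordered graphs are represented on the vertex set {0..<m} with the natural order
  and a (symmetric) edge relation E.  A 2-colouring of the ordered complete graph K_N
  on {0..<N} is a function col :: nat => nat => bool, where for i < j the value
  col i j = True means the edge ij is blue and False means it is red (values for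
  i >= j are irrelevant).\<close>

definition has_coloured_copy ::
  "nat \<Rightarrow> (nat \<Rightarrow> nat \<Rightarrow> bool) \<Rightarrow> (nat \<Rightarrow> nat \<Rightarrow> bool) \<Rightarrow> nat \<Rightarrow> bool" where
  "has_coloured_copy m E C N \<longleftrightarrow>
     (\<exists>f. strict_mono_on {0..<m} f \<and> f ` {0..<m} \<subseteq> {0..<N} \<and>
          (\<forall>u<m. \<forall>v<m. u < v \<and> E u v \<longrightarrow> C (f u) (f v)))"

definition ordered_ramsey ::
  "nat \<Rightarrow> (nat \<Rightarrow> nat \<Rightarrow> bool) \<Rightarrow> nat \<Rightarrow> (nat \<Rightarrow> nat \<Rightarrow> bool) \<Rightarrow> nat" where
  "ordered_ramsey m1 E1 m2 E2 =
     (LEAST N. \<forall>col :: nat \<Rightarrow> nat \<Rightarrow> bool.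
         has_coloured_copy m1 E1 col N \<or> has_coloured_copy m2 E2 (\<lambda>i j. \<not> col i j) N)"

text \<open>The path on n vertices visiting the vertices in the order
  \<sigma> 0, \<sigma> 1, ..., \<sigma> (n-1); with \<sigma> a bijection of {0..<n} this gives every ordering
  of a path.\<close>

definition path_edges :: "nat \<Rightarrow> (nat \<Rightarrow> nat) \<Rightarrow> nat \<Rightarrow> nat \<Rightarrow> bool" where
  "path_edges n \<sigma> u v \<longleftrightarrow> (\<exists>i. i + 1 < n \<and> {u, v} = {\<sigma> i, \<sigma> (i + 1)})"

end

theory Submission
  imports Defs
begin

lemma enum_set:
  fixes X :: "nat set"
  assumes "finite X"
  shows "\<exists>e. strict_mono_on {0..<card X} e \<and> e ` {0..<card X} = X"
proof -
  let ?xs = "sorted_list_of_set X"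
  have len: "length ?xs = card X" by simp
  have sw: "sorted_wrt (<) ?xs" by simp
  have "strict_mono_on {0..<card X} ((!) ?xs)"
    unfolding strict_mono_on_def using sorted_wrt_nth_less[OF sw] len by auto
  moreover have "((!) ?xs) ` {0..<card X} = set ?xs"
    using len by (auto simp: set_conv_nth)
  moreover have "set ?xs = X" using assms by simp
  ultimately show ?thesis by blast
qed

lemma combine:
  assumes X: "finite X" "X \<subseteq> {0..<N}" "card X = s"
    and Y: "finite Y" "Y \<subseteq> {0..<N}" "card Y = s"
    and XY: "\<forall>x\<in>X. \<forall>y\<in>Y. x < y \<and> \<not> col x y"
    and IH: "\<forall>col' b' E'. b' \<le> B \<longrightarrow> has_coloured_copy a P col' s \<or>
                 has_coloured_copy b' E' (\<lambda>i j. \<not> col' i j) s"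
    and b: "b \<le> 2 * B"
  shows "has_coloured_copy a P col N \<or> has_coloured_copy b E (\<lambda>i j. \<not> col i j) N"
proof -
  obtain eX where eX: "strict_mono_on {0..<s} eX" "eX ` {0..<s} = X"
    using enum_set[OF X(1)] X(3) by blast
  obtain eY where eY: "strict_mono_on {0..<s} eY" "eY ` {0..<s} = Y"
    using enum_set[OF Y(1)] Y(3) by blast
  define b1 where "b1 = (b + 1) div 2"
  define b2 where "b2 = b - b1"
  have b1B: "b1 \<le> B" and b2B: "b2 \<le> B" using b unfolding b1_def b2_def by auto
  have lift: "has_coloured_copy a P col N"
    if h: "has_coloured_copy a P (\<lambda>u v. col (e u) (e v)) s"
      and e: "strict_mono_on {0..<s} e" "e ` {0..<s} \<subseteq> {0..<N}" for e
  proof -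
    obtain f where f: "strict_mono_on {0..<a} f" "f ` {0..<a} \<subseteq> {0..<s}"
      "\<forall>u<a. \<forall>v<a. u < v \<and> P u v \<longrightarrow> col (e (f u)) (e (f v))"
      using h unfolding has_coloured_copy_def by blast
    have "strict_mono_on {0..<a} (e \<circ> f)"
      proof (rule strict_mono_onI)
      fix u v assume uv: "u \<in> {0..<a}" "v \<in> {0..<a}" "u < v"
      then have "f u < f v" "f u \<in> {0..<s}" "f v \<in> {0..<s}"
        using f(2) strict_mono_onD[OF f(1)] by (auto simp: image_subset_iff)
      then show "(e \<circ> f) u < (e \<circ> f) v" using e(1) unfolding strict_mono_on_def by auto
    qed
    moreover have "(e \<circ> f) ` {0..<a} \<subseteq> {0..<N}" using f(2) e(2) by auto
    ultimately show ?thesis unfolding has_coloured_copy_def using f(3)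
      by (intro exI[of _ "e \<circ> f"]) auto
  qed
  show ?thesis
  proof (cases "has_coloured_copy a P (\<lambda>u v. col (eX u) (eX v)) s")
    case True then show ?thesis using lift eX X by auto
  next
    case nX: False
    show ?thesis
    proof (cases "has_coloured_copy a P (\<lambda>u v. col (eY u) (eY v)) s")
      case True then show ?thesis using lift eY Y by auto
    next
      case nY: False
      have "has_coloured_copy b1 E (\<lambda>i j. \<not> col (eX i) (eX j)) s"
        using IH[rule_format, OF b1B, of "\<lambda>u v. col (eX u) (eX v)" E] nX by simp
      then obtain fL where fL: "strict_mono_on {0..<b1} fL" "fL ` {0..<b1} \<subseteq> {0..<s}"
        "\<forall>u<b1. \<forall>v<b1. u < v \<and> E u v \<longrightarrow> \<not> col (eX (fL u)) (eX (fL v))"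
        unfolding has_coloured_copy_def by blast
      have "has_coloured_copy b2 (\<lambda>u v. E (u + b1) (v + b1)) (\<lambda>i j. \<not> col (eY i) (eY j)) s"
        using IH[rule_format, OF b2B, of "\<lambda>u v. col (eY u) (eY v)"] nY by simp
      then obtain fR where fR: "strict_mono_on {0..<b2} fR" "fR ` {0..<b2} \<subseteq> {0..<s}"
        "\<forall>u<b2. \<forall>v<b2. u < v \<and> E (u + b1) (v + b1) \<longrightarrow> \<not> col (eY (fR u)) (eY (fR v))"
        unfolding has_coloured_copy_def by blast
      define f where "f u = (if u < b1 then eX (fL u) else eY (fR (u - b1)))" for u
      have fX: "f u \<in> X" if "u < b1" for u using that fL(2) eX(2) f_def by (auto simp: image_subset_iff)
      have fY: "f u \<in> Y" if "\<not> u < b1" "u < b" for u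
        using that fR(2) eY(2) f_def b2_def by (auto simp: image_subset_iff)
      have sm: "strict_mono_on {0..<b} f"
      proof (rule strict_mono_onI)
        fix u v assume uv: "u \<in> {0..<b}" "v \<in> {0..<b}" "u < v"
        show "f u < f v"
        proof (cases "v < b1")
          case True
          then have "fL u < fL v" using fL(1) uv unfolding strict_mono_on_def by auto
          moreover have "fL u \<in> {0..<s}" "fL v \<in> {0..<s}" using fL(2) True uv by (auto simp: image_subset_iff)
          ultimately show ?thesis using eX(1) True uv unfolding strict_mono_on_def f_def by auto
        next
          case vF: False
          show ?thesis
          proof (cases "u < b1")
            case True then show ?thesis using fX[of u] fY[of v] vF uv XY by auto
          next
            case False
            then have "fR (u - b1) < fR (v - b1)"
              using strict_mono_onD[OF fR(1), of "u-b1" "v-b1"] uv vF b2_def by auto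
            moreover have "fR (u - b1) \<in> {0..<s}" "fR (v - b1) \<in> {0..<s}"
              using fR(2) False vF uv b2_def by (auto simp: image_subset_iff)
            ultimately show ?thesis using eY(1) False vF uv unfolding strict_mono_on_def f_def by auto
          qed
        qed
      qed
      have im: "f ` {0..<b} \<subseteq> {0..<N}"
      proof
        fix z assume "z \<in> f ` {0..<b}"
        then obtain u where u: "u < b" "z = f u" by auto
        show "z \<in> {0..<N}"
          using fX[of u] fY[of u] u X(2) Y(2) by (cases "u < b1") auto
      qed
      have ed: "\<forall>u<b. \<forall>v<b. u < v \<and> E u v \<longrightarrow> \<not> col (f u) (f v)"
      proof (intro allI impI)
        fix u v assume uv: "u < b" "v < b" "u < v \<and> E u v"
        show "\<not> col (f u) (f v)"
        proof (cases "v < b1")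
          case True then show ?thesis using fL(3) uv f_def by auto
        next
          case vF: False
          show ?thesis
          proof (cases "u < b1")
            case True then show ?thesis using fX[of u] fY[of v] vF uv XY by auto
          next
            case False
            have "\<not> col (eY (fR (u - b1))) (eY (fR (v - b1)))"
              using fR(3) False vF uv b2_def by auto
            then show ?thesis using False vF f_def by auto
          qed
        qed
      qed
      have "has_coloured_copy b E (\<lambda>i j. \<not> col i j) N"
        unfolding has_coloured_copy_def using sm im ed by blast
      then show ?thesis by simp
    qed
  qed
qed


lemma blocks:
  assumes bij: "bij_betw \<sigma> {0..<a} {0..<a}" and a1: "1 \<le> a" and s1: "1 \<le> s"
    and N: "2 * a * s \<le> N"
  shows "has_coloured_copy a (path_edges a \<sigma>) col N \<or>
    (\<exists>X Y. finite X \<and> finite Y \<and> X \<subseteq> {0..<N} \<and> Y \<subseteq> {0..<N} \<and> card X = s \<and> card Y = s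
       \<and> (\<forall>x\<in>X. \<forall>y\<in>Y. x < y \<and> \<not> col x y))"
    (is "_ \<or> ?R")
proof (cases ?R)
  case True then show ?thesis by blast
next
  case nR: False
  define D where "D p = {2*s*p..<2*s*(p+1)}" for p
  define badj where "badj x y = ((x<y \<longrightarrow> col x y) \<and> (y<x \<longrightarrow> col y x))" for x y
  have cardD: "card (D p) = 2*s" for p unfolding D_def by (simp add: algebra_simps)
  have ordD: "x < y" if "x \<in> D p" "y \<in> D q" "p < q" for x y p q
  proof -
    have "2*s*(p+1) \<le> 2*s*q" using that(3) by (intro mult_le_mono2) auto
    then show ?thesis using that(1,2) unfolding D_def by auto
  qed
  have subD: "D p \<subseteq> {0..<N}" if "p < a" for p
  proof -
    have "2*s*(p+1) \<le> 2*s*a" using that by (intro mult_le_mono2) auto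
    then show ?thesis using N unfolding D_def by (auto simp: algebra_simps)
  qed
  have \<sigma>a: "\<sigma> i < a" if "i < a" for i using bij that unfolding bij_betw_def by auto
  have \<sigma>inj: "\<sigma> i \<noteq> \<sigma> j" if "i < a" "j < a" "i \<noteq> j" for i j
    using bij that unfolding bij_betw_def inj_on_def by auto
  define C where "C i = (\<exists>S. S \<subseteq> D (\<sigma> i) \<and> s \<le> card S \<and> (\<forall>x\<in>S. \<exists>g. g i = x \<and>
       (\<forall>t. i \<le> t \<and> t < a \<longrightarrow> g t \<in> D (\<sigma> t)) \<and> (\<forall>t. i \<le> t \<and> Suc t < a \<longrightarrow> badj (g t) (g (Suc t)))))" for i
  have C0: "C 0"
  proof -
    have "0 \<le> a - 1" by simp
    then show ?thesis
    proof (induction rule: inc_induct)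
      case base
      show ?case unfolding C_def
      proof (rule exI[of _ "D (\<sigma> (a-1))"], intro conjI ballI)
        show "D (\<sigma> (a-1)) \<subseteq> D (\<sigma> (a-1))" by simp
        show "s \<le> card (D (\<sigma> (a-1)))" using cardD by simp
        fix x assume xD: "x \<in> D (\<sigma> (a-1))"
        have "\<forall>t. a-1 \<le> t \<and> t < a \<longrightarrow> x \<in> D (\<sigma> t)"
        proof (intro allI impI)
          fix t assume "a-1 \<le> t \<and> t < a"
          then have "t = a-1" by arith
          then show "x \<in> D (\<sigma> t)" using xD by simp
        qed
        moreover have "\<forall>t. a-1 \<le> t \<and> Suc t < a \<longrightarrow> badj x x" by arith
        ultimately show "\<exists>g. g (a-1) = x \<and> (\<forall>t. a-1 \<le> t \<and> t < a \<longrightarrow> g t \<in> D (\<sigma> t)) \<and>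
           (\<forall>t. a-1 \<le> t \<and> Suc t < a \<longrightarrow> badj (g t) (g (Suc t)))"
          by (intro exI[of _ "\<lambda>_. x"]) simp
      qed
    next
      case (step n)
      then obtain S' where S': "S' \<subseteq> D (\<sigma> (Suc n))" "s \<le> card S'"
        "\<forall>y\<in>S'. \<exists>g. g (Suc n) = y \<and> (\<forall>t. Suc n \<le> t \<and> t < a \<longrightarrow> g t \<in> D (\<sigma> t)) \<and>
            (\<forall>t. Suc n \<le> t \<and> Suc t < a \<longrightarrow> badj (g t) (g (Suc t)))"
        unfolding C_def by blast
      have na: "n < a" "Suc n < a" using step by auto
      define T where "T = {x \<in> D (\<sigma> n). \<forall>y\<in>S'. \<not> badj x y}"
      have finD: "finite (D p)" for p unfolding D_def by simp
      have finT: "finite T" unfolding T_def using finD by simp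
      have finS': "finite S'" using S'(1) finD finite_subset by blast
      have "\<not> s \<le> card T"
      proof
        assume "s \<le> card T"
        then obtain X where X: "X \<subseteq> T" "card X = s" "finite X" by (meson obtain_subset_with_card_n)
        obtain Y where Y: "Y \<subseteq> S'" "card Y = s" "finite Y" using S'(2) by (meson obtain_subset_with_card_n)
        have XD: "X \<subseteq> D (\<sigma> n)" using X(1) unfolding T_def by auto
        have XN: "X \<subseteq> {0..<N}" using XD subD[OF \<sigma>a[OF na(1)]] by auto
        have YN: "Y \<subseteq> {0..<N}" using Y(1) S'(1) subD[OF \<sigma>a[OF na(2)]] by auto
        have nb: "\<not> badj x y" if "x \<in> X" "y \<in> Y" for x y using that X(1) Y(1) unfolding T_def by auto
        have ne: "\<sigma> n \<noteq> \<sigma> (Suc n)" using \<sigma>inj na by auto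
        show False
        proof (cases "\<sigma> n < \<sigma> (Suc n)")
          case True
          have "\<forall>x\<in>X. \<forall>y\<in>Y. x < y \<and> \<not> col x y"
          proof (intro ballI)
            fix x y assume xy: "x \<in> X" "y \<in> Y"
            have "x < y" using ordD[OF _ _ True] xy XD Y(1) S'(1) by blast
            then show "x < y \<and> \<not> col x y" using nb[OF xy] unfolding badj_def by auto
          qed
          then show False using nR X Y XN YN by blast
        next
          case False
          then have lt: "\<sigma> (Suc n) < \<sigma> n" using ne by auto
          have "\<forall>y\<in>Y. \<forall>x\<in>X. y < x \<and> \<not> col y x"
          proof (intro ballI)
            fix x y assume xy: "y \<in> Y" "x \<in> X"
            have "y < x" using ordD[OF _ _ lt] xy XD Y(1) S'(1) by blast
            then show "y < x \<and> \<not> col y x" using nb[OF xy(2,1)] unfolding badj_def by auto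
          qed
          then show False using nR X Y XN YN by blast
        qed
      qed
      then have cT: "card T < s" by simp
      define S where "S = D (\<sigma> n) - T"
      have "T \<subseteq> D (\<sigma> n)" unfolding T_def by auto
      then have "card S = 2*s - card T" unfolding S_def
        using card_Diff_subset[OF finT] cardD by metis
      then have cS: "s \<le> card S" using cT by simp
      show ?case unfolding C_def
      proof (rule exI[of _ S], intro conjI ballI)
        show "S \<subseteq> D (\<sigma> n)" unfolding S_def by auto
        show "s \<le> card S" by (rule cS)
        fix x assume x: "x \<in> S"
        then obtain y where y: "y \<in> S'" "badj x y" unfolding S_def T_def by auto
        obtain g where g: "g (Suc n) = y" "\<forall>t. Suc n \<le> t \<and> t < a \<longrightarrow> g t \<in> D (\<sigma> t)"
          "\<forall>t. Suc n \<le> t \<and> Suc t < a \<longrightarrow> badj (g t) (g (Suc t))" using S'(3) y(1) by blast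
        have xD: "x \<in> D (\<sigma> n)" using x unfolding S_def by auto
        show "\<exists>g. g n = x \<and> (\<forall>t. n \<le> t \<and> t < a \<longrightarrow> g t \<in> D (\<sigma> t)) \<and>
           (\<forall>t. n \<le> t \<and> Suc t < a \<longrightarrow> badj (g t) (g (Suc t)))"
        proof (intro exI[of _ "g(n := x)"] conjI allI impI)
          show "(g(n := x)) n = x" by simp
          fix t
          show "(g(n := x)) t \<in> D (\<sigma> t)" if "n \<le> t \<and> t < a"
            using that g(2) xD by (cases "t = n") auto
          show "badj ((g(n := x)) t) ((g(n := x)) (Suc t))" if "n \<le> t \<and> Suc t < a"
            using that g(1,3) y(2) by (cases "t = n") auto
        qed
      qed
    qed
  qed
  then obtain S where S: "S \<subseteq> D (\<sigma> 0)" "s \<le> card S" "\<forall>x\<in>S. \<exists>g. g 0 = x \<and>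
       (\<forall>t. t < a \<longrightarrow> g t \<in> D (\<sigma> t)) \<and> (\<forall>t. Suc t < a \<longrightarrow> badj (g t) (g (Suc t)))"
    unfolding C_def by auto
  have "S \<noteq> {}" using S(2) s1 by auto
  then obtain x where "x \<in> S" by auto
  then obtain g where g: "\<forall>t. t < a \<longrightarrow> g t \<in> D (\<sigma> t)" "\<forall>t. Suc t < a \<longrightarrow> badj (g t) (g (Suc t))"
    using S(3) by blast
  define \<tau> where "\<tau> = inv_into {0..<a} \<sigma>"
  have \<tau>1: "\<tau> u < a" "\<sigma> (\<tau> u) = u" if "u < a" for u
  proof -
    have u: "u \<in> \<sigma> ` {0..<a}" using that bij unfolding bij_betw_def by auto
    show "\<tau> u < a" using inv_into_into[OF u] unfolding \<tau>_def by auto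
    show "\<sigma> (\<tau> u) = u" using f_inv_into_f[OF u] unfolding \<tau>_def by auto
  qed
  have \<tau>2: "\<tau> (\<sigma> i) = i" if "i < a" for i
    using that bij unfolding \<tau>_def bij_betw_def by (auto intro: inv_into_f_f)
  define f where "f u = g (\<tau> u)" for u
  have fD: "f u \<in> D u" if "u < a" for u using g(1) \<tau>1[OF that] unfolding f_def by metis
  have sm: "strict_mono_on {0..<a} f"
  proof (rule strict_mono_onI)
    fix u v assume "u \<in> {0..<a}" "v \<in> {0..<a}" "u < v"
    then show "f u < f v" using ordD[OF fD[of u] fD[of v]] by auto
  qed
  have im: "f ` {0..<a} \<subseteq> {0..<N}"
  proof
    fix z assume "z \<in> f ` {0..<a}"
    then obtain u where u: "u < a" "z = f u" by auto
    show "z \<in> {0..<N}" using fD[OF u(1)] subD[OF u(1)] u(2) by blast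
  qed
  have ed: "\<forall>u<a. \<forall>v<a. u < v \<and> path_edges a \<sigma> u v \<longrightarrow> col (f u) (f v)"
  proof (intro allI impI)
    fix u v assume uv: "u < a" "v < a" "u < v \<and> path_edges a \<sigma> u v"
    then obtain i where i: "i + 1 < a" "{u, v} = {\<sigma> i, \<sigma> (i + 1)}" unfolding path_edges_def by auto
    have lt: "f u < f v" using uv ordD[OF fD[of u] fD[of v]] by auto
    have b: "badj (g i) (g (Suc i))" using g(2) i(1) by auto
    have "(u = \<sigma> i \<and> v = \<sigma> (i+1)) \<or> (u = \<sigma> (i+1) \<and> v = \<sigma> i)" using i(2) uv
      by (auto simp: doubleton_eq_iff)
    then show "col (f u) (f v)"
    proof
      assume h: "u = \<sigma> i \<and> v = \<sigma> (i+1)"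
      then have "f u = g i" "f v = g (Suc i)" using \<tau>2 i(1) unfolding f_def by auto
      then show ?thesis using b lt unfolding badj_def by auto
    next
      assume h: "u = \<sigma> (i+1) \<and> v = \<sigma> i"
      then have "f u = g (Suc i)" "f v = g i" using \<tau>2 i(1) unfolding f_def by auto
      then show ?thesis using b lt unfolding badj_def by auto
    qed
  qed
  show ?thesis unfolding has_coloured_copy_def using sm im ed by blast
qed

lemma mainlem:
  assumes bij: "bij_betw \<sigma> {0..<a} {0..<a}"
  shows "\<forall>col N b E. b \<le> 2^j \<longrightarrow> (2*a)^j \<le> N \<longrightarrow>
     has_coloured_copy a (path_edges a \<sigma>) col N \<or> has_coloured_copy b E (\<lambda>i j. \<not> col i j) N"
proof (induction j)
  case 0
  show ?case
  proof (intro allI impI)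
    fix col N b E assume "b \<le> (2::nat)^0" "(2*a)^0 \<le> N"
    then have "b \<le> 1" "1 \<le> N" by auto
    then have "has_coloured_copy b E (\<lambda>i j. \<not> col i j) N"
      unfolding has_coloured_copy_def
      by (intro exI[of _ "\<lambda>_. 0"]) (auto simp: strict_mono_on_def)
    then show "has_coloured_copy a (path_edges a \<sigma>) col N \<or> has_coloured_copy b E (\<lambda>i j. \<not> col i j) N" by simp
  qed
next
  case (Suc j)
  show ?case
  proof (intro allI impI)
    fix col N b E assume b: "b \<le> (2::nat)^Suc j" and N: "(2*a)^Suc j \<le> N"
    show "has_coloured_copy a (path_edges a \<sigma>) col N \<or> has_coloured_copy b E (\<lambda>i j. \<not> col i j) N"
    proof (cases "a = 0")
      case True
      then have "has_coloured_copy a (path_edges a \<sigma>) col N"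
        unfolding has_coloured_copy_def by (intro exI[of _ id]) (auto simp: strict_mono_on_def)
      then show ?thesis by simp
    next
      case False
      define s where "s = (2*a)^j"
      have s1: "1 \<le> s" using False unfolding s_def by simp
      have N': "2*a*s \<le> N" using N unfolding s_def by simp
      from blocks[OF bij _ s1 N', of col] False
      consider "has_coloured_copy a (path_edges a \<sigma>) col N" |
        X Y where "finite X" "finite Y" "X \<subseteq> {0..<N}" "Y \<subseteq> {0..<N}" "card X = s" "card Y = s"
         "\<forall>x\<in>X. \<forall>y\<in>Y. x < y \<and> \<not> col x y" by force
      then show ?thesis
      proof cases
        case 1 then show ?thesis by simp
      next
        case 2
        have IH': "\<forall>col' b' E'. b' \<le> 2^j \<longrightarrow> has_coloured_copy a (path_edges a \<sigma>) col' s \<or>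
                 has_coloured_copy b' E' (\<lambda>i j. \<not> col' i j) s"
          using Suc.IH unfolding s_def by simp
        show ?thesis
          by (rule combine[OF 2(1,3,5) 2(2,4,6) 2(7) IH']) (use b in simp)
      qed
    qed
  qed
qed

theorem corollaryc:
  fixes n :: nat and \<sigma> :: "nat \<Rightarrow> nat"
  assumes "n \<ge> 1" and "bij_betw \<sigma> {0..<n} {0..<n}"
  shows "ordered_ramsey n (path_edges n \<sigma>) n (path_edges n \<sigma>)
           \<le> 2 ^ (nat \<lceil>log 2 (real n)\<rceil> * (nat \<lceil>log 2 (real n)\<rceil> + 1))"
proof -
  define k where "k = nat \<lceil>log 2 (real n)\<rceil>"
  have "log 2 (real n) \<le> real k" unfolding k_def by linarith
  then have "2 powr (log 2 (real n)) \<le> 2 powr (real k)" by (intro powr_mono) auto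
  moreover have "2 powr (log 2 (real n)) = real n" using assms(1) by simp
  moreover have "2 powr (real k) = 2 ^ k" by (simp add: powr_realpow)
  ultimately have "real n \<le> 2 ^ k" by simp
  then have nk: "n \<le> 2 ^ k" by (metis of_nat_le_iff of_nat_numeral of_nat_power)
  have "(2*n)^k \<le> (2*2^k)^k" using nk by (intro power_mono) auto
  also have "(2*2^k)^k = (2::nat)^(k*(k+1))"
    by (simp add: power_mult[symmetric] mult.commute power_add)
  finally have bd: "(2*n)^k \<le> 2^(k*(k+1))" .
  have "\<forall>col :: nat \<Rightarrow> nat \<Rightarrow> bool.
         has_coloured_copy n (path_edges n \<sigma>) col (2^(k*(k+1))) \<or>
         has_coloured_copy n (path_edges n \<sigma>) (\<lambda>i j. \<not> col i j) (2^(k*(k+1)))"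
    using mainlem[OF assms(2), of k] nk bd by blast
  then show ?thesis unfolding ordered_ramsey_def k_def[symmetric] by (rule Least_le)
qed

end
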